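(* Two groups $k,k'\in[K]$ are oracle-equivalent if and only if the optimal loss $l^*((1-\alpha)\mathbf{e}_k+\alpha\mathbf{e}_{k'})$ is constant for all $\alpha\in[0,1]$.
   Context: $K$ groups with fixed distributions $D_k$ over $\mathcal{X}\times\mathcal{Y}$; hypothesis class $\mathcal{H}$, loss $\mathcal{L}:\mathcal{Y}\times\mathcal{Y}\to\mathbb{R}$. For $\mathbf{p}\in\Delta^K$, $D_{\mathbf{p}}=\sum_jp_jD_j$, $\mathcal{L}_{\mathbf{p}}(h)=\mathbb{E}_{D_{\mathbf{p}}}[\mathcal{L}(h(x),y)]$, $\mathcal{L}_{D_j}(h)=\mathcal{L}_j(h)=\mathbb{E}_{D_j}[\mathcal{L}(h(x),y)]$, and $l^*(\mathbf{p})=\min_{h\in\mathcal{H}}\mathcal{L}_{\mathbf{p}}(h)$ (minima assumed attained). $\mathbf{e}_j$ is the $j$-th vertex of the simplex. A set $K^*\subseteq[K]$ is oracle-equivalent if there exists $h\in\bigcap_{j\in K^*}\arg\min_{h'\in\mathcal{H}}\mathcal{L}_{D_j}(h')$ with $\mathcal{L}_{j_1}(h)=\mathcal{L}_{j_2}(h)$ for all $j_1,j_2\in K^*$. *)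

theory Defs
  imports "HOL-Probability.Probability"
begin

text \<open>Groups are indexed by \<open>{..<K}\<close> (standing for [K]). A weight vector is a
function \<open>nat \<Rightarrow> real\<close> supported on \<open>{..<K}\<close>.\<close>

definition prob_simplex :: "nat \<Rightarrow> (nat \<Rightarrow> real) set" where
  "prob_simplex K = {p. (\<forall>j. 0 \<le> p j) \<and> (\<forall>j\<ge>K. p j = 0) \<and> (\<Sum>j<K. p j) = 1}"

definition vertex :: "nat \<Rightarrow> nat \<Rightarrow> real" where
  "vertex k = (\<lambda>j. if j = k then 1 else 0)"

definition loss_on :: "('y \<Rightarrow> 'y \<Rightarrow> real) \<Rightarrow> ('x \<times> 'y) measure \<Rightarrow> ('x \<Rightarrow> 'y) \<Rightarrow> real" where
  "loss_on L D h = (\<integral>z. L (h (fst z)) (snd z) \<partial>D)"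

text \<open>Loss under the mixture D_p = sum_j p_j D_j (expanded by linearity of expectation).\<close>
definition mix_loss :: "nat \<Rightarrow> (nat \<Rightarrow> ('x \<times> 'y) measure) \<Rightarrow> ('y \<Rightarrow> 'y \<Rightarrow> real)
    \<Rightarrow> (nat \<Rightarrow> real) \<Rightarrow> ('x \<Rightarrow> 'y) \<Rightarrow> real" where
  "mix_loss K D L p h = (\<Sum>j<K. p j * loss_on L (D j) h)"

definition opt_loss :: "nat \<Rightarrow> (nat \<Rightarrow> ('x \<times> 'y) measure) \<Rightarrow> ('x \<Rightarrow> 'y) set
    \<Rightarrow> ('y \<Rightarrow> 'y \<Rightarrow> real) \<Rightarrow> (nat \<Rightarrow> real) \<Rightarrow> real" where
  "opt_loss K D H L p = (INF h\<in>H. mix_loss K D L p h)"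

definition argmin_on :: "('a \<Rightarrow> real) \<Rightarrow> 'a set \<Rightarrow> 'a set" where
  "argmin_on f H = {h \<in> H. \<forall>h'\<in>H. f h \<le> f h'}"

definition oracle_equivalent :: "(nat \<Rightarrow> ('x \<times> 'y) measure) \<Rightarrow> ('x \<Rightarrow> 'y) set
    \<Rightarrow> ('y \<Rightarrow> 'y \<Rightarrow> real) \<Rightarrow> nat set \<Rightarrow> bool" where
  "oracle_equivalent D H L Ks \<longleftrightarrow>
     (\<exists>h. (\<forall>j\<in>Ks. h \<in> argmin_on (loss_on L (D j)) H) \<and>
          (\<forall>j1\<in>Ks. \<forall>j2\<in>Ks. loss_on L (D j1) h = loss_on L (D j2) h))"

end

theory Submission
  imports Defs
begin

lemma mix_alpha:
  assumes "k < K" "k' < K"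
  shows "mix_loss K D L (\<lambda>j. (1 - \<alpha>) * vertex k j + \<alpha> * vertex k' j) h
       = (1 - \<alpha>) * loss_on L (D k) h + \<alpha> * loss_on L (D k') h"
proof -
  have "mix_loss K D L (\<lambda>j. (1 - \<alpha>) * vertex k j + \<alpha> * vertex k' j) h
     = (\<Sum>j<K. (1 - \<alpha>) * (if j = k then loss_on L (D j) h else 0))
       + (\<Sum>j<K. \<alpha> * (if j = k' then loss_on L (D j) h else 0))"
    unfolding mix_loss_def vertex_def sum.distrib[symmetric]
    by (rule sum.cong) (auto simp: algebra_simps)
  also have "\<dots> = (1 - \<alpha>) * loss_on L (D k) h + \<alpha> * loss_on L (D k') h"
    using assms by (simp add: sum_distrib_left[symmetric])
  finally show ?thesis .
qed

lemma simplex_alpha: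
  assumes "k < K" "k' < K" "0 \<le> \<alpha>" "\<alpha> \<le> 1"
  shows "(\<lambda>j. (1 - \<alpha>) * vertex k j + \<alpha> * vertex k' j) \<in> prob_simplex K"
proof -
  have "(\<Sum>j<K. (1 - \<alpha>) * vertex k j + \<alpha> * vertex k' j)
     = (\<Sum>j<K. (1 - \<alpha>) * (if j = k then 1 else 0)) + (\<Sum>j<K. \<alpha> * (if j = k' then 1 else 0))"
    unfolding vertex_def sum.distrib by simp
  also have "\<dots> = 1" using assms by (simp add: sum_distrib_left[symmetric])
  finally show ?thesis unfolding prob_simplex_def using assms by (auto simp: vertex_def)
qed

lemma inf_min:
  fixes F :: "'a \<Rightarrow> real"
  assumes "h0 \<in> H" "\<forall>h\<in>H. F h0 \<le> F h"
  shows "(INF h\<in>H. F h) = F h0"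
proof (rule antisym)
  show "(INF h\<in>H. F h) \<le> F h0"
    by (rule cINF_lower) (use assms in \<open>auto intro!: bdd_belowI2\<close>)
  show "F h0 \<le> (INF h\<in>H. F h)"
    by (rule cINF_greatest) (use assms in auto)
qed

theorem proposition8:
  fixes K :: nat and D :: "nat \<Rightarrow> ('x \<times> 'y) measure" and H :: "('x \<Rightarrow> 'y) set"
    and L :: "'y \<Rightarrow> 'y \<Rightarrow> real" and k k' :: nat
  assumes dists: "\<forall>j<K. prob_space (D j)"
    and integ: "\<forall>j<K. \<forall>h\<in>H. integrable (D j) (\<lambda>z. L (h (fst z)) (snd z))"
    and attained: "\<forall>p\<in>prob_simplex K. \<exists>h\<in>H. \<forall>h'\<in>H. mix_loss K D L p h \<le> mix_loss K D L p h'"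
    and k: "k < K" and k': "k' < K"
  shows "oracle_equivalent D H L {k, k'} \<longleftrightarrow>
    (\<exists>c. \<forall>\<alpha>\<in>{0..1::real}.
       opt_loss K D H L (\<lambda>j. (1 - \<alpha>) * vertex k j + \<alpha> * vertex k' j) = c)"
proof -
  define f where "f = loss_on L (D k)"
  define g where "g = loss_on L (D k')"
  define P where "P = (\<lambda>\<alpha>::real. (\<lambda>j. (1 - \<alpha>) * vertex k j + \<alpha> * vertex k' j))"
  have mix: "\<And>\<alpha> h. mix_loss K D L (P \<alpha>) h = (1 - \<alpha>) * f h + \<alpha> * g h"
    unfolding P_def f_def g_def using mix_alpha[OF k k'] by blast
  have opt: "\<And>\<alpha>. opt_loss K D H L (P \<alpha>) = (INF h\<in>H. (1 - \<alpha>) * f h + \<alpha> * g h)"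
    unfolding opt_loss_def mix by simp
  have att: "\<And>\<alpha>. 0 \<le> \<alpha> \<Longrightarrow> \<alpha> \<le> 1 \<Longrightarrow> \<exists>h\<in>H. \<forall>h'\<in>H. (1 - \<alpha>) * f h + \<alpha> * g h \<le> (1 - \<alpha>) * f h' + \<alpha> * g h'"
  proof -
    fix \<alpha> :: real assume "0 \<le> \<alpha>" "\<alpha> \<le> 1"
    then have "P \<alpha> \<in> prob_simplex K" unfolding P_def by (rule simplex_alpha[OF k k'])
    then have "\<exists>h\<in>H. \<forall>h'\<in>H. mix_loss K D L (P \<alpha>) h \<le> mix_loss K D L (P \<alpha>) h'"
      using attained by blast
    then show "\<exists>h\<in>H. \<forall>h'\<in>H. (1 - \<alpha>) * f h + \<alpha> * g h \<le> (1 - \<alpha>) * f h' + \<alpha> * g h'"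
      unfolding mix .
  qed
  have OE: "oracle_equivalent D H L {k, k'} \<longleftrightarrow>
      (\<exists>h\<in>H. (\<forall>h'\<in>H. f h \<le> f h') \<and> (\<forall>h'\<in>H. g h \<le> g h') \<and> f h = g h)"
    unfolding oracle_equivalent_def argmin_on_def f_def g_def by auto
  have main: "(\<exists>h\<in>H. (\<forall>h'\<in>H. f h \<le> f h') \<and> (\<forall>h'\<in>H. g h \<le> g h') \<and> f h = g h)
     \<longleftrightarrow> (\<exists>c. \<forall>\<alpha>\<in>{0..1::real}. opt_loss K D H L (P \<alpha>) = c)"
  proof
    assume "\<exists>h\<in>H. (\<forall>h'\<in>H. f h \<le> f h') \<and> (\<forall>h'\<in>H. g h \<le> g h') \<and> f h = g h"
    then obtain h0 where h0: "h0 \<in> H" "\<forall>h'\<in>H. f h0 \<le> f h'" "\<forall>h'\<in>H. g h0 \<le> g h'" "f h0 = g h0"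
      by blast
    have "\<forall>\<alpha>\<in>{0..1::real}. opt_loss K D H L (P \<alpha>) = f h0"
    proof
      fix \<alpha> :: real assume a: "\<alpha> \<in> {0..1}"
      have "\<forall>h\<in>H. (1 - \<alpha>) * f h0 + \<alpha> * g h0 \<le> (1 - \<alpha>) * f h + \<alpha> * g h"
      proof
        fix h assume "h \<in> H"
        then have "f h0 \<le> f h" "g h0 \<le> g h" using h0 by auto
        then show "(1 - \<alpha>) * f h0 + \<alpha> * g h0 \<le> (1 - \<alpha>) * f h + \<alpha> * g h"
          using a by (intro add_mono mult_left_mono) auto
      qed
      then show "opt_loss K D H L (P \<alpha>) = f h0"
        unfolding opt using inf_min[OF h0(1)] h0(4) by (simp add: algebra_simps)
    qed
    then show "\<exists>c. \<forall>\<alpha>\<in>{0..1::real}. opt_loss K D H L (P \<alpha>) = c" by blast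
  next
    assume "\<exists>c. \<forall>\<alpha>\<in>{0..1::real}. opt_loss K D H L (P \<alpha>) = c"
    then obtain c where c: "\<forall>\<alpha>\<in>{0..1::real}. opt_loss K D H L (P \<alpha>) = c" by blast
    have c0: "\<forall>h\<in>H. c \<le> f h"
    proof -
      obtain h where h: "h \<in> H" "\<forall>h'\<in>H. (1 - 0) * f h + 0 * g h \<le> (1 - 0) * f h' + 0 * g h'"
        using att[of 0] by auto
      have "opt_loss K D H L (P 0) = f h" unfolding opt using inf_min[of h H "\<lambda>h. (1-0) * f h + 0 * g h"] h by simp
      then show ?thesis using c h by auto
    qed
    have c1: "\<forall>h\<in>H. c \<le> g h"
    proof -
      obtain h where h: "h \<in> H" "\<forall>h'\<in>H. (1 - 1) * f h + 1 * g h \<le> (1 - 1) * f h' + 1 * g h'"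
        using att[of 1] by auto
      have "opt_loss K D H L (P 1) = g h" unfolding opt using inf_min[of h H "\<lambda>h. (1-1) * f h + 1 * g h"] h by simp
      then show ?thesis using c h by auto
    qed
    obtain h where h: "h \<in> H" "\<forall>h'\<in>H. (1 - 1/2) * f h + (1/2) * g h \<le> (1 - 1/2) * f h' + (1/2) * g h'"
      using att[of "1/2"] by auto
    have "opt_loss K D H L (P (1/2)) = (1 - 1/2) * f h + (1/2) * g h"
      unfolding opt using inf_min[of h H "\<lambda>h. (1-1/2) * f h + (1/2) * g h"] h by simp
    then have "(1 - 1/2) * f h + (1/2) * g h = c" using c by auto
    moreover have "c \<le> f h" "c \<le> g h" using c0 c1 h by auto
    ultimately have "f h = c \<and> g h = c" by simp
    then have "f h = c" "g h = c" by auto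
    then show "\<exists>h\<in>H. (\<forall>h'\<in>H. f h \<le> f h') \<and> (\<forall>h'\<in>H. g h \<le> g h') \<and> f h = g h"
      using h(1) c0 c1 by auto
  qed
  show ?thesis using main unfolding OE P_def by simp
qed

end
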